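(* Let $F:\mathcal{G}_{\Sigma,\Delta,\pi}\to\mathcal{G}_{\Sigma,\Delta,\pi}$ be a causal graph dynamics with a monotonic local rule $f$ of radius $r$ (so $F$ is monotonic), and assume that $\mathrm{Conj}_F(R)$ is a singleton $\{\overline{F}(R)\}$ for every renaming $R$. Then the assignment $\widetilde{f}:\mathbf{D}^r_{\Sigma,\Delta,\pi}\to\mathbf{G}_{\Sigma,\Delta,\pi}$ given on objects by $\widetilde{f}((H,\{c\}))=f((H,c))$ and $\widetilde{f}((\varnothing,\emptyset))=\varnothing$, and on a morphism $m:(H,C)\to(H',C')$ by the morphism $\widetilde{f}(m):\widetilde{f}((H,C))\to\widetilde{f}((H',C'))$ with $|\widetilde{f}(m)|=\overline{F}(|m|)$, is a well-defined functor.
   Context: Fix an uncountably infinite set $\mathcal{V}$, sets $\Sigma,\Delta$, finite $\pi$. Graphs: countable $V(G)\subset\mathcal{V}$, a set $E(G)$ of pairwise disjoint two-element subsets of $V(G)\times\pi$, partial labelings $\sigma(G),\delta(G)$; $\subseteq$ is componentwise inclusion. Renamings are bijections of $\mathcal{V}$ acting naturally on graphs and pointed graphs ($V(R(G))=R(V(G))$, edges $\{u\!:\!i,v\!:\!j\}\mapsto\{R(u)\!:\!i,R(v)\!:\!j\}$, labelings precomposed with $R^{-1}$, $R(G,v)=(R(G),R(v))$). $\mathrm{Conj}_F(R)$ is the set of renamings $R'$ with $F\circ R=R'\circ F$. Disk $G^r_c=(H,c)$: vertices at distance $\le r+1$ from $c$, edges of $G$ with an endpoint at distance $\le r$, vertex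 labels restricted to distance $\le r$, edge labels of kept edges; $\mathcal{D}^r$ the set of radius-$r$ disks, ordered by $(H,c)\subseteq(H',c')$ iff $H\subseteq H'$ and $c=c'$. A local rule of radius $r$ is $f:\mathcal{D}^r\to$ graphs with: each renaming $R$ has $R'$ with $f\circ R=R'\circ f$; families of disks with empty intersection have images with empty intersection; bounded $|V(f(D))|$; $f(G^r_u),f(G^r_v)$ consistent for all $G,u,v$. A CGD is $F(G)=\bigcup_{v\in V(G)}f(G^r_v)$. Category $\mathbf{G}_{\Sigma,\Delta,\pi}$: objects graphs, morphism $m:G\to H$ a renaming $|m|$ with $|m|(G)\subseteq H$, composition by composition of renamings. Category $\mathbf{D}^r_{\Sigma,\Delta,\pi}$: objects $(H,\{c\})$ for $(H,c)\in\mathcal{D}^r$ and $(\varnothing,\emptyset)$; morphisms $m:(H_1,C_1)\to(H_2,C_2)$ are morphisms $m:H_1\to H_2$ of $\mathbf{G}_{\Sigma,\Delta,\pi}$ with $|m|(C_1)\subseteq C_2$. *)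

theory Defs
  imports Main "HOL-Library.Countable_Set"
begin

text \<open>Vertices of type 'v (the name space, assumed uncountable in the theorem),
ports of type 'p (finite), vertex labels 's, edge labels 'd.
An edge is a two-element set of vertex:port pairs.\<close>

record ('v, 'p, 's, 'd) graph =
  gV :: "'v set"
  gE :: "('v \<times> 'p) set set"
  gsig :: "'v \<Rightarrow> 's option"
  gdel :: "('v \<times> 'p) set \<Rightarrow> 'd option"

definition is_graph :: "('v, 'p, 's, 'd) graph \<Rightarrow> bool" where
  "is_graph G \<longleftrightarrow>
     countable (gV G) \<and>
     (\<forall>e\<in>gE G. e \<subseteq> gV G \<times> UNIV \<and> card e = 2) \<and>
     (\<forall>e\<in>gE G. \<forall>e'\<in>gE G. e \<noteq> e' \<longrightarrow> e \<inter> e' = {}) \<and>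
     dom (gsig G) \<subseteq> gV G \<and> dom (gdel G) \<subseteq> gE G"

definition empty_graph :: "('v, 'p, 's, 'd) graph" where
  "empty_graph = \<lparr>gV = {}, gE = {}, gsig = (\<lambda>_. None), gdel = (\<lambda>_. None)\<rparr>"

definition subgraph :: "('v, 'p, 's, 'd) graph \<Rightarrow> ('v, 'p, 's, 'd) graph \<Rightarrow> bool" where
  "subgraph G H \<longleftrightarrow> gV G \<subseteq> gV H \<and> gE G \<subseteq> gE H \<and>
     gsig G \<subseteq>\<^sub>m gsig H \<and> gdel G \<subseteq>\<^sub>m gdel H"

text \<open>Union of a family of graphs (labels taken from any member; meaningful when
the members are consistent).\<close>
definition gUnion :: "('v, 'p, 's, 'd) graph set \<Rightarrow> ('v, 'p, 's, 'd) graph" where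
  "gUnion S = \<lparr>gV = \<Union>(gV ` S), gE = \<Union>(gE ` S),
     gsig = (\<lambda>x. if \<exists>H\<in>S. gsig H x \<noteq> None
                  then gsig (SOME H. H \<in> S \<and> gsig H x \<noteq> None) x else None),
     gdel = (\<lambda>x. if \<exists>H\<in>S. gdel H x \<noteq> None
                  then gdel (SOME H. H \<in> S \<and> gdel H x \<noteq> None) x else None)\<rparr>"

definition consistent :: "('v, 'p, 's, 'd) graph \<Rightarrow> ('v, 'p, 's, 'd) graph \<Rightarrow> bool" where
  "consistent G H \<longleftrightarrow>
     (\<forall>x. gsig G x \<noteq> None \<and> gsig H x \<noteq> None \<longrightarrow> gsig G x = gsig H x) \<and>
     (\<forall>e. gdel G e \<noteq> None \<and> gdel H e \<noteq> None \<longrightarrow> gdel G e = gdel H e) \<and>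
     is_graph (gUnion {G, H})"

definition rename :: "('v \<Rightarrow> 'v) \<Rightarrow> ('v, 'p, 's, 'd) graph \<Rightarrow> ('v, 'p, 's, 'd) graph" where
  "rename R G = \<lparr>gV = R ` gV G,
     gE = (\<lambda>e. apfst R ` e) ` gE G,
     gsig = gsig G \<circ> inv R,
     gdel = (\<lambda>e. gdel G (apfst (inv R) ` e))\<rparr>"

definition prename :: "('v \<Rightarrow> 'v) \<Rightarrow> ('v, 'p, 's, 'd) graph \<times> 'v \<Rightarrow> ('v, 'p, 's, 'd) graph \<times> 'v" where
  "prename R D = (rename R (fst D), R (snd D))"

definition adj_rel :: "('v, 'p, 's, 'd) graph \<Rightarrow> ('v \<times> 'v) set" where
  "adj_rel G = {(u, v). \<exists>i j. {(u, i), (v, j)} \<in> gE G}"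

definition dist_le :: "('v, 'p, 's, 'd) graph \<Rightarrow> nat \<Rightarrow> 'v \<Rightarrow> 'v \<Rightarrow> bool" where
  "dist_le G n c v \<longleftrightarrow> c \<in> gV G \<and> v \<in> gV G \<and> (\<exists>k\<le>n. (c, v) \<in> adj_rel G ^^ k)"

definition disk :: "('v, 'p, 's, 'd) graph \<Rightarrow> nat \<Rightarrow> 'v \<Rightarrow> ('v, 'p, 's, 'd) graph" where
  "disk G r c = \<lparr>gV = {v \<in> gV G. dist_le G (Suc r) c v},
     gE = {e \<in> gE G. \<exists>u i. (u, i) \<in> e \<and> dist_le G r c u},
     gsig = gsig G |` {v. dist_le G r c v},
     gdel = gdel G |` {e \<in> gE G. \<exists>u i. (u, i) \<in> e \<and> dist_le G r c u}\<rparr>"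

definition pdisk :: "('v, 'p, 's, 'd) graph \<Rightarrow> nat \<Rightarrow> 'v \<Rightarrow> ('v, 'p, 's, 'd) graph \<times> 'v" where
  "pdisk G r c = (disk G r c, c)"

definition Disks :: "nat \<Rightarrow> (('v, 'p, 's, 'd) graph \<times> 'v) set" where
  "Disks r = {D. \<exists>G c. is_graph G \<and> c \<in> gV G \<and> D = pdisk G r c}"

definition local_rule :: "nat \<Rightarrow> (('v, 'p, 's, 'd) graph \<times> 'v \<Rightarrow> ('v, 'p, 's, 'd) graph) \<Rightarrow> bool" where
  "local_rule r f \<longleftrightarrow>
     (\<forall>D\<in>Disks r. is_graph (f D)) \<and>
     (\<forall>R. bij R \<longrightarrow> (\<exists>R'. bij R' \<and> (\<forall>D\<in>Disks r. f (prename R D) = rename R' (f D)))) \<and>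
     (\<forall>S. S \<subseteq> Disks r \<and> S \<noteq> {} \<and> (\<Inter>D\<in>S. gV (fst D)) = {} \<longrightarrow> (\<Inter>D\<in>S. gV (f D)) = {}) \<and>
     (\<exists>b::nat. \<forall>D\<in>Disks r. finite (gV (f D)) \<and> card (gV (f D)) \<le> b) \<and>
     (\<forall>G u v. is_graph G \<and> u \<in> gV G \<and> v \<in> gV G \<longrightarrow>
        consistent (f (pdisk G r u)) (f (pdisk G r v)))"

definition monotonic_rule :: "nat \<Rightarrow> (('v, 'p, 's, 'd) graph \<times> 'v \<Rightarrow> ('v, 'p, 's, 'd) graph) \<Rightarrow> bool" where
  "monotonic_rule r f \<longleftrightarrow>
     (\<forall>D\<in>Disks r. \<forall>D'\<in>Disks r. subgraph (fst D) (fst D') \<and> snd D = snd D' \<longrightarrow> subgraph (f D) (f D'))"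

definition cgd :: "nat \<Rightarrow> (('v, 'p, 's, 'd) graph \<times> 'v \<Rightarrow> ('v, 'p, 's, 'd) graph) \<Rightarrow>
    ('v, 'p, 's, 'd) graph \<Rightarrow> ('v, 'p, 's, 'd) graph" where
  "cgd r f G = gUnion ((\<lambda>v. f (pdisk G r v)) ` gV G)"

definition Conj :: "nat \<Rightarrow> (('v, 'p, 's, 'd) graph \<times> 'v \<Rightarrow> ('v, 'p, 's, 'd) graph) \<Rightarrow>
    ('v \<Rightarrow> 'v) \<Rightarrow> ('v \<Rightarrow> 'v) set" where
  "Conj r f R = {R'. bij R' \<and> (\<forall>G. is_graph G \<longrightarrow> cgd r f (rename R G) = rename R' (cgd r f G))}"

definition Gmor :: "('v, 'p, 's, 'd) graph \<Rightarrow> ('v, 'p, 's, 'd) graph \<Rightarrow> ('v \<Rightarrow> 'v) \<Rightarrow> bool" where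
  "Gmor G H m \<longleftrightarrow> is_graph G \<and> is_graph H \<and> bij m \<and> subgraph (rename m G) H"

definition Dobj :: "nat \<Rightarrow> ('v, 'p, 's, 'd) graph \<times> 'v set \<Rightarrow> bool" where
  "Dobj r X \<longleftrightarrow> (\<exists>H c. X = (H, {c}) \<and> (H, c) \<in> Disks r) \<or> X = (empty_graph, {})"

definition Dmor :: "nat \<Rightarrow> ('v, 'p, 's, 'd) graph \<times> 'v set \<Rightarrow> ('v, 'p, 's, 'd) graph \<times> 'v set \<Rightarrow>
    ('v \<Rightarrow> 'v) \<Rightarrow> bool" where
  "Dmor r X Y m \<longleftrightarrow> Dobj r X \<and> Dobj r Y \<and> Gmor (fst X) (fst Y) m \<and> m ` snd X \<subseteq> snd Y"

text \<open>A functor D^r \<rightarrow> G given by an object map and a morphism map (a morphism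
X \<rightarrow> Y of D^r is determined by X, Y and its underlying renaming).\<close>
definition is_functor_DG :: "nat \<Rightarrow> (('v, 'p, 's, 'd) graph \<times> 'v set \<Rightarrow> ('v, 'p, 's, 'd) graph) \<Rightarrow>
    (('v, 'p, 's, 'd) graph \<times> 'v set \<Rightarrow> ('v, 'p, 's, 'd) graph \<times> 'v set \<Rightarrow> ('v \<Rightarrow> 'v) \<Rightarrow> ('v \<Rightarrow> 'v)) \<Rightarrow> bool" where
  "is_functor_DG r omap mmap \<longleftrightarrow>
     (\<forall>X. Dobj r X \<longrightarrow> is_graph (omap X)) \<and>
     (\<forall>X Y m. Dmor r X Y m \<longrightarrow> Gmor (omap X) (omap Y) (mmap X Y m)) \<and>
     (\<forall>X. Dobj r X \<longrightarrow> mmap X X id = id) \<and>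
     (\<forall>X Y Z m1 m2. Dmor r X Y m1 \<and> Dmor r Y Z m2 \<longrightarrow>
        mmap X Z (m2 \<circ> m1) = mmap Y Z m2 \<circ> mmap X Y m1)"

definition ftilde :: "(('v, 'p, 's, 'd) graph \<times> 'v \<Rightarrow> ('v, 'p, 's, 'd) graph) \<Rightarrow>
    ('v, 'p, 's, 'd) graph \<times> 'v set \<Rightarrow> ('v, 'p, 's, 'd) graph" where
  "ftilde f X = (if snd X = {} then empty_graph else f (fst X, the_elem (snd X)))"

end

theory Submission
  imports Defs
begin

lemma graph_eqI:
  fixes G H :: "('v, 'p, 's, 'd) graph"
  shows "gV G = gV H \<Longrightarrow> gE G = gE H \<Longrightarrow> gsig G = gsig H \<Longrightarrow> gdel G = gdel H \<Longrightarrow> G = H"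
  by (cases G; cases H) simp

lemma bij_inv_simps[simp]:
  assumes "bij m"
  shows "m (inv m x) = x" "inv m (m x) = x"
  using assms by (simp_all add: bij_is_surj bij_is_inj surj_f_inv_f)

lemma apfst_inv_pt[simp]:
  fixes m :: "'a \<Rightarrow> 'a"
  assumes "bij m"
  shows "apfst m (apfst (inv m) x) = x" "apfst (inv m) (apfst m x) = x"
  using assms by (cases x; simp)+

lemma apfst_inv_img:
  fixes m :: "'a \<Rightarrow> 'a"
  assumes "bij m"
  shows "apfst m ` (apfst (inv m) ` e) = e" "apfst (inv m) ` (apfst m ` e) = e"
  using assms by (simp_all add: image_image)

lemma inj_apfst_img:
  fixes m :: "'a \<Rightarrow> 'a"
  assumes "bij m"
  shows "inj (\<lambda>e. apfst m ` e)"
  by (rule injI) (metis apfst_inv_img(2)[OF assms])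

lemma rename_id: "rename id G = G"
proof -
  have "\<And>e. apfst id ` e = e" by (simp add: apfst_id)
  then show ?thesis by (intro graph_eqI) (simp_all add: rename_def inv_id)
qed

lemma rename_comp:
  assumes "bij m1" "bij m2"
  shows "rename (m2 \<circ> m1) G = rename m2 (rename m1 G)"
proof (rule graph_eqI)
  show "gE (rename (m2 \<circ> m1) G) = gE (rename m2 (rename m1 G))"
    by (simp add: rename_def image_image apfst_compose)
  have i: "inv (m2 \<circ> m1) = inv m1 \<circ> inv m2" by (rule o_inv_distrib[OF assms(2,1)])
  show "gsig (rename (m2 \<circ> m1) G) = gsig (rename m2 (rename m1 G))"
    by (simp add: rename_def i comp_assoc)
  have "\<And>e. apfst (inv m1 \<circ> inv m2) ` e = apfst (inv m1) ` (apfst (inv m2) ` e)"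
    by (simp add: image_image apfst_compose)
  then show "gdel (rename (m2 \<circ> m1) G) = gdel (rename m2 (rename m1 G))"
    by (simp add: rename_def i image_image apfst_compose)
qed (simp add: rename_def image_comp)

lemma rename_graph:
  assumes "bij m" "is_graph G"
  shows "is_graph (rename m G)"
proof -
  have inj: "inj m" using assms bij_is_inj by blast
  have injA: "inj (apfst m :: 'a \<times> 'b \<Rightarrow> _)"
    using inj by (auto simp: inj_def apfst_def map_prod_def split: prod.splits)
  show ?thesis
    unfolding is_graph_def
  proof (intro conjI ballI impI)
    show "countable (gV (rename m G))" using assms by (simp add: rename_def is_graph_def)
  next
    fix e assume "e \<in> gE (rename m G)"
    then obtain e0 where e0: "e0 \<in> gE G" "e = apfst m ` e0" by (auto simp: rename_def)
    then have "e0 \<subseteq> gV G \<times> UNIV" "card e0 = 2" using assms by (auto simp: is_graph_def)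
    then show "e \<subseteq> gV (rename m G) \<times> UNIV" using e0 by (auto simp: rename_def apfst_def map_prod_def)
    show "card e = 2" using e0 \<open>card e0 = 2\<close> card_image injA
      by (metis inj_on_subset subset_UNIV)
  next
    fix e e' assume "e \<in> gE (rename m G)" "e' \<in> gE (rename m G)" "e \<noteq> e'"
    then obtain e0 e0' where "e0 \<in> gE G" "e = apfst m ` e0" "e0' \<in> gE G" "e' = apfst m ` e0'"
      by (auto simp: rename_def)
    moreover have "e0 \<noteq> e0'" using calculation \<open>e \<noteq> e'\<close> by auto
    ultimately show "e \<inter> e' = {}" using assms injA
      by (auto simp: is_graph_def image_Int[symmetric])
  next
    show "dom (gsig (rename m G)) \<subseteq> gV (rename m G)"
    proof
      fix x assume "x \<in> dom (gsig (rename m G))"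
      then have "inv m x \<in> gV G" using assms by (auto simp: rename_def is_graph_def)
      then show "x \<in> gV (rename m G)" using assms
        by (auto simp: rename_def intro!: image_eqI[where x="inv m x"])
    qed
  next
    show "dom (gdel (rename m G)) \<subseteq> gE (rename m G)"
    proof
      fix x assume "x \<in> dom (gdel (rename m G))"
      then have "apfst (inv m) ` x \<in> gE G" using assms by (auto simp: rename_def is_graph_def)
      then show "x \<in> gE (rename m G)" using assms apfst_inv_img[OF assms(1)]
        by (auto simp: rename_def intro!: image_eqI[where x="apfst (inv m) ` x"])
    qed
  qed
qed


lemma adj_rename:
  fixes m :: "'v \<Rightarrow> 'v" and G :: "('v, 'p, 's, 'd) graph"
  assumes "bij m"
  shows "(m a, m b) \<in> adj_rel (rename m G) \<longleftrightarrow> (a, b) \<in> adj_rel G"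
proof -
  have eq: "\<And>i j. {(m a, i), (m b, j)} = apfst m ` {(a, i), (b, j)}" by simp
  have "\<And>i j. {(m a, i), (m b, j)} \<in> (\<lambda>e. apfst m ` e) ` gE G \<longleftrightarrow> {(a, i), (b, j)} \<in> gE G"
    unfolding eq by (rule inj_image_mem_iff[OF inj_apfst_img[OF assms]])
  then show ?thesis by (simp add: adj_rel_def rename_def)
qed

lemma adj_pow_rename:
  fixes m :: "'v \<Rightarrow> 'v" and G :: "('v, 'p, 's, 'd) graph"
  assumes "bij m"
  shows "(m a, m b) \<in> adj_rel (rename m G) ^^ k \<longleftrightarrow> (a, b) \<in> adj_rel G ^^ k"
proof (induction k arbitrary: b)
  case 0
  then show ?case using assms by (simp add: bij_is_inj inj_eq)
next
  case (Suc k)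
  have "(m a, m b) \<in> adj_rel (rename m G) ^^ Suc k \<longleftrightarrow>
     (\<exists>y. (m a, y) \<in> adj_rel (rename m G) ^^ k \<and> (y, m b) \<in> adj_rel (rename m G))"
    by (auto simp: relpow.simps(2))
  also have "\<dots> \<longleftrightarrow> (\<exists>y. (m a, m y) \<in> adj_rel (rename m G) ^^ k \<and> (m y, m b) \<in> adj_rel (rename m G))"
    using assms by (metis bij_inv_simps(1))
  also have "\<dots> \<longleftrightarrow> (\<exists>y. (a, y) \<in> adj_rel G ^^ k \<and> (y, b) \<in> adj_rel G)"
    using Suc adj_rename[OF assms, where G=G] by simp
  also have "\<dots> \<longleftrightarrow> (a, b) \<in> adj_rel G ^^ Suc k" by (auto simp: relpow.simps(2))
  finally show ?case .
qed

lemma dist_rename[simp]: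
  fixes m :: "'v \<Rightarrow> 'v" and G :: "('v, 'p, 's, 'd) graph"
  assumes "bij m"
  shows "dist_le (rename m G) n (m c) (m v) \<longleftrightarrow> dist_le G n c v"
proof -
  have "\<And>x. m x \<in> gV (rename m G) \<longleftrightarrow> x \<in> gV G"
    using assms by (simp add: rename_def bij_is_inj inj_image_mem_iff)
  then show ?thesis using adj_pow_rename[OF assms, where G=G] by (simp add: dist_le_def)
qed

lemma dist_rename':
  fixes m :: "'v \<Rightarrow> 'v" and G :: "('v, 'p, 's, 'd) graph"
  assumes "bij m"
  shows "dist_le (rename m G) n (m c) x \<longleftrightarrow> dist_le G n c (inv m x)"
  using dist_rename[OF assms, of G n c "inv m x"] assms by simp

lemma rename_sel:
  "gV (rename m G) = m ` gV G" "gE (rename m G) = (\<lambda>e. apfst m ` e) ` gE G"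
  "gsig (rename m G) = gsig G \<circ> inv m" "gdel (rename m G) = (\<lambda>e. gdel G (apfst (inv m) ` e))"
  by (simp_all add: rename_def)

lemma disk_rename:
  fixes m :: "'v \<Rightarrow> 'v" and G :: "('v, 'p, 's, 'd) graph"
  assumes "bij m"
  shows "disk (rename m G) r (m c) = rename m (disk G r c)"
proof (rule graph_eqI)
  show "gV (disk (rename m G) r (m c)) = gV (rename m (disk G r c))"
    using assms by (auto simp: disk_def rename_sel)
  show "gE (disk (rename m G) r (m c)) = gE (rename m (disk G r c))"
    using assms apply (auto simp: disk_def rename_sel)
     apply blast
    apply (rule_tac x="m u" in exI)
    apply (auto intro!: image_eqI)
    apply (rule_tac x=i in exI)
    apply (rule_tac x="(u,i)" in image_eqI)
     apply auto
    done
  show "gsig (disk (rename m G) r (m c)) = gsig (rename m (disk G r c))"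
    using assms by (auto simp: disk_def rename_sel restrict_map_def dist_rename' fun_eq_iff)
  show "gdel (disk (rename m G) r (m c)) = gdel (rename m (disk G r c))"
  proof (rule ext)
    fix e
    have A: "(e \<in> (\<lambda>e. apfst m ` e) ` gE G) \<longleftrightarrow> apfst (inv m) ` e \<in> gE G"
    proof
      assume "e \<in> (\<lambda>e. apfst m ` e) ` gE G"
      then obtain e0 where "e0 \<in> gE G" "e = apfst m ` e0" by blast
      then show "apfst (inv m) ` e \<in> gE G" using apfst_inv_img(2)[OF assms, of e0] by simp
    next
      assume h: "apfst (inv m) ` e \<in> gE G"
      show "e \<in> (\<lambda>e. apfst m ` e) ` gE G"
        by (rule image_eqI[where x="apfst (inv m) ` e" and f="\<lambda>e. apfst m ` e", OF apfst_inv_img(1)[OF assms, of e, symmetric] h])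
    qed
    have B: "(\<exists>u i. (u, i) \<in> e \<and> dist_le (rename m G) r (m c) u) \<longleftrightarrow>
         (\<exists>u i. (u, i) \<in> apfst (inv m) ` e \<and> dist_le G r c u)"
      using assms by (force simp: dist_rename')
    show "gdel (disk (rename m G) r (m c)) e = gdel (rename m (disk G r c)) e"
      using A B by (simp add: disk_def rename_sel restrict_map_def)
  qed
qed

lemma pdisk_rename:
  fixes m :: "'v \<Rightarrow> 'v" and G :: "('v, 'p, 's, 'd) graph"
  assumes "bij m"
  shows "pdisk (rename m G) r (m c) = prename m (pdisk G r c)"
  using disk_rename[OF assms] by (simp add: pdisk_def prename_def)

lemma Disks_rename:
  fixes m :: "'v \<Rightarrow> 'v" and D :: "('v, 'p, 's, 'd) graph \<times> 'v"
  assumes "bij m" "D \<in> Disks r"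
  shows "prename m D \<in> Disks r"
proof -
  obtain G c where G: "is_graph G" "c \<in> gV G" "D = pdisk G r c" using assms by (auto simp: Disks_def)
  have "prename m D = pdisk (rename m G) r (m c)" using G pdisk_rename[OF assms(1), of G r c] by simp
  moreover have "is_graph (rename m G)" using rename_graph[OF assms(1) G(1)] .
  moreover have "m c \<in> gV (rename m G)" using G by (simp add: rename_def)
  ultimately show ?thesis unfolding Disks_def by blast
qed

definition agree_sig :: "('v, 'p, 's, 'd) graph set \<Rightarrow> bool" where
  "agree_sig S \<longleftrightarrow> (\<forall>H1\<in>S. \<forall>H2\<in>S. \<forall>x. gsig H1 x \<noteq> None \<longrightarrow> gsig H2 x \<noteq> None \<longrightarrow> gsig H1 x = gsig H2 x)"

definition agree_del :: "('v, 'p, 's, 'd) graph set \<Rightarrow> bool" where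
  "agree_del S \<longleftrightarrow> (\<forall>H1\<in>S. \<forall>H2\<in>S. \<forall>x. gdel H1 x \<noteq> None \<longrightarrow> gdel H2 x \<noteq> None \<longrightarrow> gdel H1 x = gdel H2 x)"

lemma gUnion_sig:
  assumes "agree_sig S" "H \<in> S" "gsig H x \<noteq> None"
  shows "gsig (gUnion S) x = gsig H x"
proof -
  have "\<exists>H. H \<in> S \<and> gsig H x \<noteq> None" using assms by blast
  from someI_ex[OF this] show ?thesis using assms unfolding gUnion_def agree_sig_def by auto
qed

lemma gUnion_sig_None:
  assumes "\<forall>H\<in>S. gsig H x = None"
  shows "gsig (gUnion S) x = None"
  using assms unfolding gUnion_def by auto

lemma gUnion_del:
  assumes "agree_del S" "H \<in> S" "gdel H x \<noteq> None"
  shows "gdel (gUnion S) x = gdel H x"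
proof -
  have "\<exists>H. H \<in> S \<and> gdel H x \<noteq> None" using assms by blast
  from someI_ex[OF this] show ?thesis using assms unfolding gUnion_def agree_del_def by auto
qed

lemma gUnion_del_None:
  assumes "\<forall>H\<in>S. gdel H x = None"
  shows "gdel (gUnion S) x = None"
  using assms unfolding gUnion_def by auto

lemma gUnion_rename:
  fixes R :: "'v \<Rightarrow> 'v" and S :: "('v, 'p, 's, 'd) graph set"
  assumes "bij R" "agree_sig S" "agree_del S"
  shows "gUnion (rename R ` S) = rename R (gUnion S)"
proof (rule graph_eqI)
  have as: "agree_sig (rename R ` S)" using assms(2) by (auto simp: agree_sig_def rename_def)
  have ad: "agree_del (rename R ` S)" using assms(3) by (auto simp: agree_del_def rename_def)
  show "gV (gUnion (rename R ` S)) = gV (rename R (gUnion S))"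
    by (auto simp: gUnion_def rename_def)
  show "gE (gUnion (rename R ` S)) = gE (rename R (gUnion S))"
    by (auto simp: gUnion_def rename_def)
  show "gsig (gUnion (rename R ` S)) = gsig (rename R (gUnion S))"
  proof (rule ext)
    fix x
    show "gsig (gUnion (rename R ` S)) x = gsig (rename R (gUnion S)) x"
    proof (cases "\<exists>H\<in>S. gsig H (inv R x) \<noteq> None")
      case True
      then obtain H where H: "H \<in> S" "gsig H (inv R x) \<noteq> None" by blast
      have "gsig (gUnion (rename R ` S)) x = gsig (rename R H) x"
        by (rule gUnion_sig[OF as]) (use H in \<open>auto simp: rename_def\<close>)
      moreover have "gsig (gUnion S) (inv R x) = gsig H (inv R x)" by (rule gUnion_sig[OF assms(2) H])
      ultimately show ?thesis by (simp add: rename_def)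
    next
      case False
      then show ?thesis
        by (simp add: rename_def gUnion_sig_None)
    qed
  qed
  show "gdel (gUnion (rename R ` S)) = gdel (rename R (gUnion S))"
  proof (rule ext)
    fix x
    show "gdel (gUnion (rename R ` S)) x = gdel (rename R (gUnion S)) x"
    proof (cases "\<exists>H\<in>S. gdel H (apfst (inv R) ` x) \<noteq> None")
      case True
      then obtain H where H: "H \<in> S" "gdel H (apfst (inv R) ` x) \<noteq> None" by blast
      have "gdel (gUnion (rename R ` S)) x = gdel (rename R H) x"
        by (rule gUnion_del[OF ad]) (use H in \<open>auto simp: rename_def\<close>)
      moreover have "gdel (gUnion S) (apfst (inv R) ` x) = gdel H (apfst (inv R) ` x)"
        by (rule gUnion_del[OF assms(3) H])
      ultimately show ?thesis by (simp add: rename_def)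
    next
      case False
      then show ?thesis
        by (simp add: rename_def gUnion_del_None)
    qed
  qed
qed

lemma local_conj:
  fixes m :: "'v \<Rightarrow> 'v" and f :: "('v, 'p, 's, 'd) graph \<times> 'v \<Rightarrow> ('v, 'p, 's, 'd) graph"
  assumes lr: "local_rule r f" and m: "bij m" and R': "bij R'"
    and eq: "\<forall>D\<in>Disks r. f (prename m D) = rename R' (f D)"
  shows "R' \<in> Conj r f m"
  unfolding Conj_def
proof (intro CollectI conjI allI impI R')
  fix G :: "('v, 'p, 's, 'd) graph"
  assume G: "is_graph G"
  define S where "S = (\<lambda>v. f (pdisk G r v)) ` gV G"
  have cons: "\<And>u v. u \<in> gV G \<Longrightarrow> v \<in> gV G \<Longrightarrow> consistent (f (pdisk G r u)) (f (pdisk G r v))"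
    using lr G unfolding local_rule_def by blast
  have as: "agree_sig S" unfolding agree_sig_def S_def using cons
    unfolding consistent_def by blast
  have ad: "agree_del S" unfolding agree_del_def S_def using cons
    unfolding consistent_def by blast
  have "cgd r f (rename m G) = gUnion ((\<lambda>u. f (pdisk (rename m G) r (m u))) ` gV G)"
    by (simp add: cgd_def rename_def image_image)
  also have "(\<lambda>u. f (pdisk (rename m G) r (m u))) ` gV G = rename R' ` S"
  proof -
    have "\<And>u. u \<in> gV G \<Longrightarrow> f (pdisk (rename m G) r (m u)) = rename R' (f (pdisk G r u))"
    proof -
      fix u assume u: "u \<in> gV G"
      have "pdisk G r u \<in> Disks r" using G u unfolding Disks_def by blast
      then show "f (pdisk (rename m G) r (m u)) = rename R' (f (pdisk G r u))"
        using eq pdisk_rename[OF m, of G r u] by simp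
    qed
    then show ?thesis unfolding S_def by (simp add: image_image)
  qed
  also have "gUnion (rename R' ` S) = rename R' (gUnion S)" by (rule gUnion_rename[OF R' as ad])
  finally show "cgd r f (rename m G) = rename R' (cgd r f G)" by (simp add: cgd_def S_def)
qed

lemma empty_graph_is_graph: "is_graph empty_graph"
  by (simp add: is_graph_def empty_graph_def)

lemma rename_empty: "rename R empty_graph = empty_graph"
  by (rule graph_eqI) (simp_all add: rename_def empty_graph_def fun_eq_iff)

lemma subgraph_empty: "subgraph empty_graph G"
  by (simp add: subgraph_def empty_graph_def map_le_def)

theorem proposition4p19:
  fixes r :: nat
    and f :: "('v, 'p::finite, 's, 'd) graph \<times> 'v \<Rightarrow> ('v, 'p, 's, 'd) graph"
    and Fbar :: "('v \<Rightarrow> 'v) \<Rightarrow> ('v \<Rightarrow> 'v)"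
  assumes "\<not> countable (UNIV :: 'v set)"
    and "local_rule r f"
    and "monotonic_rule r f"
    and "\<forall>R. bij R \<longrightarrow> Conj r f R = {Fbar R}"
  shows "is_functor_DG r (ftilde f) (\<lambda>X Y m. Fbar m)"
proof -
  note lr = assms(2) and mono = assms(3) and cj = assms(4)
  have conjI': "\<And>m R'. bij m \<Longrightarrow> R' \<in> Conj r f m \<Longrightarrow> Fbar m = R'"
  proof -
    fix m R' :: "'v \<Rightarrow> 'v" assume "bij m" "R' \<in> Conj r f m"
    then have "R' \<in> {Fbar m}" using cj by simp
    then show "Fbar m = R'" by simp
  qed
  have Fbar_bij: "\<And>m. bij m \<Longrightarrow> bij (Fbar m)"
  proof -
    fix m :: "'v \<Rightarrow> 'v" assume "bij m"
    then have "Fbar m \<in> Conj r f m" using cj by simp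
    then show "bij (Fbar m)" unfolding Conj_def by simp
  qed
  have obj: "\<And>X. Dobj r X \<Longrightarrow> is_graph (ftilde f X)"
  proof -
    fix X :: "('v, 'p, 's, 'd) graph \<times> 'v set" assume "Dobj r X"
    then consider H c where "X = (H, {c})" "(H, c) \<in> Disks r" | "X = (empty_graph, {})"
      unfolding Dobj_def by blast
    then show "is_graph (ftilde f X)"
    proof cases
      case 1
      then show ?thesis using lr unfolding local_rule_def by (simp add: ftilde_def)
    next
      case 2
      then show ?thesis by (simp add: ftilde_def empty_graph_is_graph)
    qed
  qed
  have fren: "\<And>m D. bij m \<Longrightarrow> D \<in> Disks r \<Longrightarrow> f (prename m D) = rename (Fbar m) (f D)"
  proof -
    fix m :: "'v \<Rightarrow> 'v" and D :: "('v, 'p, 's, 'd) graph \<times> 'v"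
    assume m: "bij m" and D: "D \<in> Disks r"
    have "\<forall>R. bij R \<longrightarrow> (\<exists>R'. bij R' \<and> (\<forall>D\<in>Disks r. f (prename R D) = rename R' (f D)))"
      using lr unfolding local_rule_def by (rule conjunct1[OF conjunct2])
    then obtain R' where R': "bij R'" "\<forall>D\<in>Disks r. f (prename m D) = rename R' (f D)"
      using m by auto
    have "Fbar m = R'" using conjI'[OF m local_conj[OF lr m R']] .
    then show "f (prename m D) = rename (Fbar m) (f D)" using R' D by simp
  qed
  show ?thesis
    unfolding is_functor_DG_def
  proof (intro conjI allI impI)
    fix X :: "('v, 'p, 's, 'd) graph \<times> 'v set" assume "Dobj r X" then show "is_graph (ftilde f X)" by (rule obj)
  next
    fix X Y :: "('v, 'p, 's, 'd) graph \<times> 'v set" and m :: "'v \<Rightarrow> 'v" assume dm: "Dmor r X Y m"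
    then have dX: "Dobj r X" and dY: "Dobj r Y" and gm: "Gmor (fst X) (fst Y) m"
      and sub: "m ` snd X \<subseteq> snd Y" unfolding Dmor_def by auto
    have m: "bij m" using gm unfolding Gmor_def by blast
    have "subgraph (rename (Fbar m) (ftilde f X)) (ftilde f Y)"
    proof -
      from dX consider H c where "X = (H, {c})" "(H, c) \<in> Disks r" | "X = (empty_graph, {})"
        unfolding Dobj_def by blast
      then show ?thesis
      proof cases
        case 1
        then have "m c \<in> snd Y" using sub by simp
        with dY obtain H' where Y: "Y = (H', {m c})" "(H', m c) \<in> Disks r"
          unfolding Dobj_def by auto
        have sg: "subgraph (rename m H) H'" using gm 1 Y unfolding Gmor_def by simp
        have pd: "prename m (H, c) \<in> Disks r" by (rule Disks_rename[OF m 1(2)])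
        have "subgraph (f (prename m (H, c))) (f (H', m c))"
          using mono pd Y sg unfolding monotonic_rule_def by (simp add: prename_def)
        then show ?thesis using fren[OF m 1(2)] 1 Y by (simp add: ftilde_def)
      next
        case 2
        then show ?thesis by (simp add: ftilde_def rename_empty subgraph_empty)
      qed
    qed
    then show "Gmor (ftilde f X) (ftilde f Y) (Fbar m)"
      unfolding Gmor_def using obj[OF dX] obj[OF dY] Fbar_bij[OF m] by blast
  next
    fix X :: "('v, 'p, 's, 'd) graph \<times> 'v set" assume "Dobj r X"
    have "id \<in> Conj r f id" unfolding Conj_def by (simp only: rename_id bij_id mem_Collect_eq simp_thms)
    then show "Fbar id = id" using conjI'[of id] by simp
  next
    fix X Y Z :: "('v, 'p, 's, 'd) graph \<times> 'v set" and m1 m2 :: "'v \<Rightarrow> 'v" assume "Dmor r X Y m1 \<and> Dmor r Y Z m2"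
    then have m1: "bij m1" and m2: "bij m2" unfolding Dmor_def Gmor_def by auto
    have C1: "\<And>G. is_graph G \<Longrightarrow> cgd r f (rename m1 G) = rename (Fbar m1) (cgd r f G)"
    proof -
    fix G :: "('v, 'p, 's, 'd) graph" assume "is_graph G"
    moreover have "Fbar m1 \<in> Conj r f m1" using cj m1 by simp
    ultimately show "cgd r f (rename m1 G) = rename (Fbar m1) (cgd r f G)" unfolding Conj_def by simp
  qed
    have C2: "\<And>G. is_graph G \<Longrightarrow> cgd r f (rename m2 G) = rename (Fbar m2) (cgd r f G)"
    proof -
    fix G :: "('v, 'p, 's, 'd) graph" assume "is_graph G"
    moreover have "Fbar m2 \<in> Conj r f m2" using cj m2 by simp
    ultimately show "cgd r f (rename m2 G) = rename (Fbar m2) (cgd r f G)" unfolding Conj_def by simp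
  qed
    have "Fbar m2 \<circ> Fbar m1 \<in> Conj r f (m2 \<circ> m1)"
      unfolding Conj_def
    proof (intro CollectI conjI allI impI)
      show "bij (Fbar m2 \<circ> Fbar m1)" by (rule bij_comp[OF Fbar_bij[OF m1] Fbar_bij[OF m2]])
      fix G :: "('v, 'p, 's, 'd) graph" assume G: "is_graph G"
      have "cgd r f (rename (m2 \<circ> m1) G) = cgd r f (rename m2 (rename m1 G))"
        by (simp only: rename_comp[OF m1 m2])
      also have "\<dots> = rename (Fbar m2) (cgd r f (rename m1 G))"
        by (rule C2[OF rename_graph[OF m1 G]])
      also have "\<dots> = rename (Fbar m2) (rename (Fbar m1) (cgd r f G))"
        by (simp only: C1[OF G])
      also have "\<dots> = rename (Fbar m2 \<circ> Fbar m1) (cgd r f G)"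
        by (simp only: rename_comp[OF Fbar_bij[OF m1] Fbar_bij[OF m2]])
      finally show "cgd r f (rename (m2 \<circ> m1) G) = rename (Fbar m2 \<circ> Fbar m1) (cgd r f G)" .
    qed
    then show "Fbar (m2 \<circ> m1) = Fbar m2 \<circ> Fbar m1"
      using conjI'[OF bij_comp[OF m1 m2]] by blast
  qed
qed

end
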